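(* Let $H$ be a hypergraph with $R(H)=\{1,2\}$ such that the graph $H^2$ of its $2$-edges is bipartite, $H$ does not contain $K_2^{\{1,2\}}$ as a subgraph, and $H$ contains a closed path $\bar P_{2k}$ of length $2k$ for some $k\ge 1$. Then $\pi(H)=\frac98$.
   Context: A hypergraph $H=(V,E)$ has finite vertex set $V$ and edge set $E\subseteq 2^V$; $R(H)=\{|F|:F\in E\}$. $H_1\subseteq H_2$ (subgraph) means there is an injective $f\colon V(H_1)\to V(H_2)$ with $f(F)\in E(H_2)$ for all $F\in E(H_1)$. For $G$ on $n$ vertices, $h_n(G)=\sum_{F\in E(G)}1/\binom{n}{|F|}$; $\pi_n(H)=\max\{h_n(G): G\text{ on } n \text{ vertices}, R(G)\subseteq R(H), H\not\subseteq G\}$ and $\pi(H)=\lim_n\pi_n(H)$. $K_2^{\{1,2\}}$ has vertices $\{1,2\}$ and edges $\{1\},\{2\},\{1,2\}$. A closed path of length $m$, $\bar P_m$, is the hypergraph with vertices $x_1,\dots,x_m$, $1$-edges $\{x_1\},\{x_m\}$ and $2$-edges $\{x_i,x_{i+1}\}$ for $1\le i\le m-1$. *)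

theory Defs
  imports Complex_Main
begin

type_synonym 'a hgraph = "'a set \<times> 'a set set"

definition verts :: "'a hgraph \<Rightarrow> 'a set" where "verts H = fst H"
definition edges :: "'a hgraph \<Rightarrow> 'a set set" where "edges H = snd H"

definition is_hypergraph :: "'a hgraph \<Rightarrow> bool" where
  "is_hypergraph H \<longleftrightarrow> finite (verts H) \<and> edges H \<subseteq> Pow (verts H)"

definition R :: "'a hgraph \<Rightarrow> nat set" where
  "R H = card ` edges H"

definition subgraph :: "'a hgraph \<Rightarrow> 'b hgraph \<Rightarrow> bool" where
  "subgraph H1 H2 \<longleftrightarrow> (\<exists>f. inj_on f (verts H1) \<and> f ` verts H1 \<subseteq> verts H2 \<and>
      (\<forall>F\<in>edges H1. f ` F \<in> edges H2))"

definition h :: "nat \<Rightarrow> 'a hgraph \<Rightarrow> real" where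
  "h n G = (\<Sum>F\<in>edges G. 1 / real (n choose card F))"

text \<open>pi_n(H): hypergraphs on n vertices are taken, w.l.o.g., on vertex set {0..<n}.\<close>
definition pi_n :: "'a hgraph \<Rightarrow> nat \<Rightarrow> real" where
  "pi_n H n = Max {h n G | G :: nat hgraph. verts G = {0..<n} \<and> is_hypergraph G \<and>
                     R G \<subseteq> R H \<and> \<not> subgraph H G}"

definition K2_12 :: "nat hgraph" where
  "K2_12 = ({1, 2}, {{1}, {2}, {1, 2}})"

definition closed_path :: "nat \<Rightarrow> nat hgraph" where
  "closed_path m = ({1..m}, {{1}, {m}} \<union> {{i, i + 1} | i. 1 \<le> i \<and> i \<le> m - 1})"

definition two_graph_bipartite :: "'a hgraph \<Rightarrow> bool" where
  "two_graph_bipartite H \<longleftrightarrow> (\<exists>A B. A \<inter> B = {} \<and> A \<union> B = verts H \<and>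
      (\<forall>F\<in>edges H. card F = 2 \<longrightarrow> card (F \<inter> A) = 1 \<and> card (F \<inter> B) = 1))"

end

theory Submission
  imports Defs
begin


lemma card_diff_ge: "finite A \<Longrightarrow> finite B \<Longrightarrow> card A \<le> card (A - B) + card B"
proof -
  assume "finite A" "finite B"
  have "card A \<le> card ((A - B) \<union> B)" using \<open>finite A\<close> \<open>finite B\<close> by (intro card_mono) auto
  also have "\<dots> \<le> card (A - B) + card B" by (rule card_Un_le)
  finally show ?thesis .
qed

lemma kst:
  fixes S :: "(nat \<times> 'p) set" and P :: "'p set"
  assumes fP: "finite P" and SP: "S \<subseteq> {0..<n} \<times> P" and e: "e > 0" and e1: "e \<le> 1"
    and cS: "real (card S) \<ge> e * real n * real (card P)" and t: "t \<ge> 1"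
    and large: "e * real n / 2 \<ge> real t"
  shows "\<exists>T Q. T \<subseteq> {0..<n} \<and> card T = t \<and> Q \<subseteq> P \<and> T \<times> Q \<subseteq> S \<and>
           real (card Q) \<ge> (e/2) * (e/(2*t))^t * real (card P)"
proof -
  define F where "F p = {x. (x,p) \<in> S}" for p
  have Fsub: "F p \<subseteq> {0..<n}" for p using SP by (auto simp: F_def)
  have finF: "finite (F p)" for p using Fsub finite_subset by blast
  have Seq: "S = (\<lambda>(p,x). (x,p)) ` Sigma P F" using SP by (auto simp: F_def image_iff)
  have "card S = card (Sigma P F)" unfolding Seq by (rule card_image) (auto simp: inj_on_def)
  also have "\<dots> = (\<Sum>p\<in>P. card (F p))" using fP finF by (simp add: card_SigmaI)
  finally have cSsum: "card S = (\<Sum>p\<in>P. card (F p))" .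
  define P' where "P' = {p\<in>P. real (card (F p)) \<ge> e * n / 2}"
  have fP': "finite P'" using fP by (simp add: P'_def)
  have P'P: "P' \<subseteq> P" by (auto simp: P'_def)
  have npos: "real n > 0" using large t by (cases "n = 0") auto
  have "real (card S) = (\<Sum>p\<in>P'. real (card (F p))) + (\<Sum>p\<in>P-P'. real (card (F p)))"
    using cSsum fP P'P by (simp add: sum.subset_diff[of P' P])
  also have "\<dots> \<le> (\<Sum>p\<in>P'. real n) + (\<Sum>p\<in>P-P'. e * n / 2)"
  proof (intro add_mono sum_mono)
    fix p assume "p \<in> P'"
    show "real (card (F p)) \<le> real n" using card_mono[OF _ Fsub[of p]] by simp
  next
    fix p assume "p \<in> P - P'"
    then show "real (card (F p)) \<le> e * n / 2" by (auto simp: P'_def)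
  qed
  also have "\<dots> = real (card P') * n + real (card (P - P')) * (e*n/2)" by simp
  also have "\<dots> \<le> real (card P') * n + real (card P) * (e*n/2)"
    using e npos fP by (intro add_left_mono mult_right_mono) (auto intro: card_mono)
  finally have "e * real n * real (card P) \<le> real (card P') * n + real (card P) * (e*n/2)" using cS by linarith
  then have "(e/2 * real (card P)) * n \<le> real (card P') * n" by (simp add: algebra_simps)
  then have cP': "e/2 * real (card P) \<le> real (card P')" using npos by simp
  define Ts where "Ts = {T. T \<subseteq> {0..<n} \<and> card T = t}"
  have fTs: "finite Ts" unfolding Ts_def by (rule finite_subset[of _ "Pow {0..<n}"]) auto
  have "e * real n / 2 \<le> real n" using e1 npos by (simp add: mult_le_cancel_right1)
  then have tn: "t \<le> n" using large by linarith
  have cTs: "card Ts = n choose t" unfolding Ts_def using n_subsets[of "{0..<n}" t] by simp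
  have cTs2: "real (card Ts) \<le> real n ^ t" unfolding cTs using binomial_le_pow[OF tn] by (metis of_nat_le_iff of_nat_power)
  define Q where "Q T = {p\<in>P'. T \<subseteq> F p}" for T
  have key: "(\<Sum>p\<in>P'. real (card (F p) choose t)) = (\<Sum>T\<in>Ts. real (card (Q T)))"
  proof -
    have "(\<Sum>p\<in>P'. real (card (F p) choose t)) = (\<Sum>p\<in>P'. \<Sum>T\<in>Ts. if T \<subseteq> F p then 1 else 0)"
    proof (rule sum.cong[OF refl])
      fix p assume "p \<in> P'"
      have "{T\<in>Ts. T \<subseteq> F p} = {T. T \<subseteq> F p \<and> card T = t}" using Fsub[of p] by (auto simp: Ts_def)
      then have "card {T\<in>Ts. T \<subseteq> F p} = card (F p) choose t" using n_subsets[OF finF[of p]] by simp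
      moreover have "(\<Sum>T\<in>Ts. if T \<subseteq> F p then 1 else 0 :: real) = real (card {T\<in>Ts. T \<subseteq> F p})"
        using fTs by (simp add: sum.inter_filter[symmetric])
      ultimately show "real (card (F p) choose t) = (\<Sum>T\<in>Ts. if T \<subseteq> F p then 1 else 0)" by simp
    qed
    also have "\<dots> = (\<Sum>T\<in>Ts. \<Sum>p\<in>P'. if T \<subseteq> F p then 1 else 0)" by (rule sum.swap)
    also have "\<dots> = (\<Sum>T\<in>Ts. real (card (Q T)))"
      using fP' by (simp add: sum.inter_filter[symmetric] Q_def)
    finally show ?thesis .
  qed
  define c where "c = (e/2) * (e/(2*t))^t"
  have lowb: "(\<Sum>p\<in>P'. real (card (F p) choose t)) \<ge> c * real (card P) * real n ^ t"
  proof -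
    have s1: "(\<Sum>p\<in>P'. real (card (F p) choose t)) \<ge> (\<Sum>p\<in>P'. (e * n /(2*t))^t)"
    proof (rule sum_mono)
      fix p assume p: "p \<in> P'"
      then have ge: "real (card (F p)) \<ge> e * n / 2" by (simp add: P'_def)
      then have "t \<le> card (F p)" using large by linarith
      then have "(real (card (F p)) / real t) ^ t \<le> real (card (F p) choose t)"
        by (rule binomial_ge_n_over_k_pow_k)
      moreover have "(e * n / (2*t)) ^ t \<le> (real (card (F p)) / real t) ^ t"
        using ge t e npos by (intro power_mono) (auto simp: divide_simps)
      ultimately show "(e * n / (2*t)) ^ t \<le> real (card (F p) choose t)" by linarith
    qed
    have s2: "(\<Sum>p\<in>P'. (e * n /(2*t))^t) = real (card P') * (e * n /(2*t))^t" by simp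
    have s3: "real (card P') * (e * n /(2*t))^t \<ge> (e/2 * real (card P)) * (e * n /(2*t))^t"
      using cP' e npos by (intro mult_right_mono) auto
    have s4: "(e/2 * real (card P)) * (e * n /(2*t))^t = c * real (card P) * real n ^ t"
      by (simp add: c_def power_mult_distrib power_divide field_simps)
    show ?thesis using s1 s2 s3 s4 by linarith
  qed
  have "\<exists>T\<in>Ts. real (card (Q T)) \<ge> c * real (card P)"
  proof (rule ccontr)
    assume "\<not> ?thesis"
    then have lt: "\<forall>T\<in>Ts. real (card (Q T)) < c * real (card P)" by auto
    have "Ts \<noteq> {}" using cTs tn by (metis card.empty zero_less_binomial_iff less_irrefl)
    then have "(\<Sum>T\<in>Ts. real (card (Q T))) < (\<Sum>T\<in>Ts. c * real (card P))"
      using fTs lt by (intro sum_strict_mono) auto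
    also have "\<dots> = real (card Ts) * (c * real (card P))" by simp
    also have "\<dots> \<le> real n ^ t * (c * real (card P))"
      using cTs2 e by (intro mult_right_mono) (auto simp: c_def)
    finally show False using lowb key by (simp add: algebra_simps)
  qed
  then obtain T where T: "T \<in> Ts" "real (card (Q T)) \<ge> c * real (card P)" by auto
  show ?thesis
  proof (intro exI conjI)
    show "T \<subseteq> {0..<n}" "card T = t" using T by (auto simp: Ts_def)
    show "Q T \<subseteq> P" using P'P by (auto simp: Q_def)
    show "T \<times> Q T \<subseteq> S" by (auto simp: Q_def F_def)
    show "(e/2) * (e/(2*t))^t * real (card P) \<le> real (card (Q T))" using T by (simp add: c_def)
  qed
qed




definition kf :: "nat \<Rightarrow> real \<Rightarrow> real" where
  "kf t e = e / 2 * (e / real (2 * t)) ^ t"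

lemma kf_pos: "e > 0 \<Longrightarrow> t \<ge> 1 \<Longrightarrow> kf t e > 0"
proof -
  assume a: "e > 0" "t \<ge> 1"
  have "e / real (2*t) > 0" using a by simp
  then show ?thesis using a by (simp add: kf_def)
qed
lemma kf_le1: "e > 0 \<Longrightarrow> e \<le> 1 \<Longrightarrow> t \<ge> 1 \<Longrightarrow> kf t e \<le> 1"
proof -
  assume a: "e > 0" "e \<le> 1" "t \<ge> 1"
  have "e / real (2*t) \<le> 1" using a by (simp add: divide_simps)
  then have "(e / real (2 * t)) ^ t \<le> 1" using a by (simp add: power_le_one)
  then have "e * (e / real (2 * t)) ^ t \<le> 1 * 1" using a by (intro mult_mono) auto
  then show ?thesis using a by (simp add: kf_def)
qed

lemma ceil_bound: "e > 0 \<Longrightarrow> real n \<ge> real (nat \<lceil>2 * real t / e\<rceil>) \<Longrightarrow> e * real n / 2 \<ge> real t"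
proof -
  assume a: "e > 0" "real n \<ge> real (nat \<lceil>2 * real t / e\<rceil>)"
  have "2 * real t / e \<le> real n" using a(2) by linarith
  then show ?thesis using a(1) by (simp add: divide_simps mult.commute)
qed

lemma box4:
  assumes c: "c > 0" "c \<le> 1" and t: "t \<ge> 1"
  shows "\<exists>N. \<forall>n\<ge>N. \<forall>S. S \<subseteq> {0..<n} \<times> {0..<n} \<times> {0..<n} \<times> {0..<n} \<and> real (card S) \<ge> c * real n ^ 4 \<longrightarrow>
     (\<exists>U Z W V. U \<subseteq> {0..<n} \<and> Z \<subseteq> {0..<n} \<and> W \<subseteq> {0..<n} \<and> V \<subseteq> {0..<n} \<and>
        card U = t \<and> card Z = t \<and> card W = t \<and> card V = t \<and> U \<times> Z \<times> W \<times> V \<subseteq> S)"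
proof -
  define c1 where "c1 = kf t c"
  define c2 where "c2 = kf t c1"
  define c3 where "c3 = kf t c2"
  have p1: "c1 > 0" "c1 \<le> 1" using c t by (auto simp: c1_def kf_pos kf_le1)
  have p2: "c2 > 0" "c2 \<le> 1" using p1 t by (auto simp: c2_def kf_pos kf_le1)
  have p3: "c3 > 0" "c3 \<le> 1" using p2 t by (auto simp: c3_def kf_pos kf_le1)
  define N where "N = nat \<lceil>2 * real t / c\<rceil> + nat \<lceil>2 * real t / c1\<rceil> + nat \<lceil>2 * real t / c2\<rceil> + nat \<lceil>2 * real t / c3\<rceil>"
  show ?thesis
  proof (intro exI[of _ N] allI impI)
    fix n S assume n: "N \<le> n" and S: "S \<subseteq> {0..<n} \<times> {0..<n} \<times> {0..<n} \<times> {0..<n} \<and> real (card S) \<ge> c * real n ^ 4"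
    have L0: "c * real n / 2 \<ge> real t" using n c by (intro ceil_bound) (auto simp: N_def)
    have L1: "c1 * real n / 2 \<ge> real t" using n p1 by (intro ceil_bound) (auto simp: N_def)
    have L2: "c2 * real n / 2 \<ge> real t" using n p2 by (intro ceil_bound) (auto simp: N_def)
    have L3: "c3 * real n / 2 \<ge> real t" using n p3 by (intro ceil_bound) (auto simp: N_def)
    define P1 where "P1 = {0..<n} \<times> {0..<n} \<times> {0..<(n::nat)}"
    have cP1: "card P1 = n ^ 3" by (simp add: P1_def card_cartesian_product power3_eq_cube)
    have "real (card S) \<ge> c * real n * real (card P1)" using S cP1 by (simp add: power_def algebra_simps)
    from kst[of P1 S n c t, OF _ _ c(1) c(2) this t L0] S
    obtain T1 Q1 where A1: "T1 \<subseteq> {0..<n}" "card T1 = t" "Q1 \<subseteq> P1" "T1 \<times> Q1 \<subseteq> S"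
       "real (card Q1) \<ge> c1 * real (card P1)" by (auto simp: P1_def c1_def kf_def)
    define P2 where "P2 = {0..<n} \<times> {0..<(n::nat)}"
    have cP2: "card P2 = n ^ 2" by (simp add: P2_def card_cartesian_product power2_eq_square)
    have "real (card Q1) \<ge> c1 * real n * real (card P2)" using A1 cP1 cP2 by (simp add: power_def algebra_simps)
    from kst[of P2 Q1 n c1 t, OF _ _ p1(1) p1(2) this t L1] A1
    obtain T2 Q2 where A2: "T2 \<subseteq> {0..<n}" "card T2 = t" "Q2 \<subseteq> P2" "T2 \<times> Q2 \<subseteq> Q1"
       "real (card Q2) \<ge> c2 * real (card P2)" by (auto simp: P1_def P2_def c2_def kf_def)
    have "real (card Q2) \<ge> c2 * real n * real (card {0..<n})" using A2 cP2 by (simp add: power_def algebra_simps)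
    from kst[of "{0..<n}" Q2 n c2 t, OF _ _ p2(1) p2(2) this t L2] A2
    obtain T3 Q3 where A3: "T3 \<subseteq> {0..<n}" "card T3 = t" "Q3 \<subseteq> {0..<n}" "T3 \<times> Q3 \<subseteq> Q2"
       "real (card Q3) \<ge> c3 * real (card {0..<n})" by (auto simp: P2_def c3_def kf_def)
    have "real t \<le> real (card Q3)" using A3(5) L3 p3 by simp
    then obtain T4 where A4: "T4 \<subseteq> Q3" "card T4 = t" by (meson obtain_subset_with_card_n of_nat_le_iff)
    have box: "T1 \<times> T2 \<times> T3 \<times> T4 \<subseteq> S"
    proof (rule subsetI)
      fix x assume "x \<in> T1 \<times> T2 \<times> T3 \<times> T4"
      then obtain a b c d where x: "x = (a,b,c,d)" "a \<in> T1" "b \<in> T2" "c \<in> T3" "d \<in> T4" by auto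
      have "d \<in> Q3" using x A4 by auto
      then have "(c,d) \<in> Q2" using x A3(4) by auto
      then have "(b,c,d) \<in> Q1" using x A2(4) by auto
      then show "x \<in> S" using x A1(4) by auto
    qed
    have T4s: "T4 \<subseteq> {0..<n}" using A4 A3 by auto
    show "\<exists>U Z W V. U \<subseteq> {0..<n} \<and> Z \<subseteq> {0..<n} \<and> W \<subseteq> {0..<n} \<and> V \<subseteq> {0..<n} \<and>
        card U = t \<and> card Z = t \<and> card W = t \<and> card V = t \<and> U \<times> Z \<times> W \<times> V \<subseteq> S"
      by (intro exI[of _ T1] exI[of _ T2] exI[of _ T3] exI[of _ T4]) (simp add: box A1(1,2) A2(1,2) A3(1,2) A4(2) T4s)
  qed
qed




lemma noK:
  assumes hH: "is_hypergraph H" and nK: "\<not> subgraph K2_12 H"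
    and e: "{x,y} \<in> edges H" and xy: "x \<noteq> y" and x1: "{x} \<in> edges H" and y1: "{y} \<in> edges H"
  shows False
proof -
  define f where "f = (\<lambda>i::nat. if i = 1 then x else y)"
  have vx: "x \<in> verts H" "y \<in> verts H" using hH e by (auto simp: is_hypergraph_def)
  have "subgraph K2_12 H"
    unfolding subgraph_def
  proof (intro exI[of _ f] conjI)
    show "inj_on f (verts K2_12)" using xy by (auto simp: inj_on_def f_def K2_12_def verts_def)
    show "f ` verts K2_12 \<subseteq> verts H" using vx by (auto simp: f_def K2_12_def verts_def)
    show "\<forall>F\<in>edges K2_12. f ` F \<in> edges H"
      using e x1 y1 by (auto simp: f_def K2_12_def edges_def insert_commute)
  qed
  then show False using nK by simp
qed

lemma embed:
  fixes H :: "'a hgraph" and G :: "nat hgraph"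
  assumes hH: "is_hypergraph H" and RH: "R H = {1,2}" and bip: "two_graph_bipartite H"
    and nK: "\<not> subgraph K2_12 H"
    and fin: "finite U" "finite Z" "finite W" "finite V"
    and cards: "card U \<ge> card (verts H)" "card Z \<ge> card (verts H)" "card W \<ge> card (verts H)" "card V \<ge> card (verts H)"
    and dis: "U \<inter> Z = {}" "U \<inter> W = {}" "U \<inter> V = {}" "Z \<inter> W = {}" "Z \<inter> V = {}" "W \<inter> V = {}"
    and sub: "U \<union> Z \<union> W \<union> V \<subseteq> verts G"
    and e1: "\<forall>u\<in>U. {u} \<in> edges G" "\<forall>v\<in>V. {v} \<in> edges G"
    and e2: "\<forall>u\<in>U. \<forall>z\<in>Z. {u,z} \<in> edges G" "\<forall>z\<in>Z. \<forall>w\<in>W. {z,w} \<in> edges G"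
            "\<forall>w\<in>W. \<forall>v\<in>V. {w,v} \<in> edges G"
  shows "subgraph H G"
proof -
  obtain X Y where XY: "X \<inter> Y = {}" "X \<union> Y = verts H"
    and bp: "\<forall>F\<in>edges H. card F = 2 \<longrightarrow> card (F \<inter> X) = 1 \<and> card (F \<inter> Y) = 1"
    using bip by (auto simp: two_graph_bipartite_def)
  have finV: "finite (verts H)" using hH by (simp add: is_hypergraph_def)
  define T where "T = {x\<in>verts H. {x} \<in> edges H}"
  define C1 where "C1 = X \<inter> T"
  define C2 where "C2 = X - T"
  define C3 where "C3 = Y \<inter> T"
  define C4 where "C4 = Y - T"
  have Csub: "C1 \<subseteq> verts H" "C2 \<subseteq> verts H" "C3 \<subseteq> verts H" "C4 \<subseteq> verts H"
    using XY by (auto simp: C1_def C2_def C3_def C4_def)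
  have finC: "finite C1" "finite C2" "finite C3" "finite C4" using Csub finV by (meson finite_subset)+
  have cC: "card C1 \<le> card U" "card C2 \<le> card W" "card C3 \<le> card V" "card C4 \<le> card Z"
    using Csub finV cards card_mono by (meson le_trans)+
  obtain f1 where f1: "f1 ` C1 \<subseteq> U" "inj_on f1 C1" using card_le_inj[OF finC(1) fin(1) cC(1)] by auto
  obtain f2 where f2: "f2 ` C2 \<subseteq> W" "inj_on f2 C2" using card_le_inj[OF finC(2) fin(3) cC(2)] by auto
  obtain f3 where f3: "f3 ` C3 \<subseteq> V" "inj_on f3 C3" using card_le_inj[OF finC(3) fin(4) cC(3)] by auto
  obtain f4 where f4: "f4 ` C4 \<subseteq> Z" "inj_on f4 C4" using card_le_inj[OF finC(4) fin(2) cC(4)] by auto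
  define f where "f x = (if x \<in> C1 then f1 x else if x \<in> C2 then f2 x else if x \<in> C3 then f3 x else f4 x)" for x
  have vcase: "x \<in> C1 \<or> x \<in> C2 \<or> x \<in> C3 \<or> x \<in> C4" if "x \<in> verts H" for x
    using that XY by (auto simp: C1_def C2_def C3_def C4_def)
  have fC1: "f x \<in> U" "f x = f1 x" if "x \<in> C1" for x using that f1 by (auto simp: f_def)
  have fC2: "f x \<in> W" "f x = f2 x" if "x \<in> C2" for x using that f2 by (auto simp: f_def C1_def C2_def)
  have fC3: "f x \<in> V" "f x = f3 x" if "x \<in> C3" for x using that f3 XY by (auto simp: f_def C1_def C2_def C3_def)
  have fC4: "f x \<in> Z" "f x = f4 x" if "x \<in> C4" for x using that f4 XY by (auto simp: f_def C1_def C2_def C3_def C4_def)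
  have inj: "inj_on f (verts H)"
  proof (rule inj_onI)
    fix x y assume xv: "x \<in> verts H" and yv: "y \<in> verts H" and eq: "f x = f y"
    have s1: "x = y" if "x \<in> C1" "y \<in> C1" using that eq fC1(2) f1(2) by (metis inj_onD)
    have s2: "x = y" if "x \<in> C2" "y \<in> C2" using that eq fC2(2) f2(2) by (metis inj_onD)
    have s3: "x = y" if "x \<in> C3" "y \<in> C3" using that eq fC3(2) f3(2) by (metis inj_onD)
    have s4: "x = y" if "x \<in> C4" "y \<in> C4" using that eq fC4(2) f4(2) by (metis inj_onD)
    have d: "\<not> (a \<in> U \<and> a \<in> Z)" "\<not> (a \<in> U \<and> a \<in> W)" "\<not> (a \<in> U \<and> a \<in> V)"
       "\<not> (a \<in> Z \<and> a \<in> W)" "\<not> (a \<in> Z \<and> a \<in> V)" "\<not> (a \<in> W \<and> a \<in> V)" for a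
      using dis by auto
    from vcase[OF xv] vcase[OF yv] show "x = y"
      by (elim disjE; metis s1 s2 s3 s4 d eq fC1(1) fC2(1) fC3(1) fC4(1))
  qed
  have img: "f ` verts H \<subseteq> verts G"
  proof
    fix y assume "y \<in> f ` verts H"
    then obtain x where "x \<in> verts H" "y = f x" by auto
    then show "y \<in> verts G" using vcase sub fC1 fC2 fC3 fC4 by blast
  qed
  have XYedge: "{f a, f b} \<in> edges G" if ab: "a \<in> X" "b \<in> Y" "{a,b} \<in> edges H" "a \<noteq> b" for a b
  proof -
    have av: "a \<in> verts H" "b \<in> verts H" using XY ab by auto
    have "\<not> (a \<in> T \<and> b \<in> T)" using noK[OF hH nK ab(3) ab(4)] by (auto simp: T_def)
    then consider "a \<in> C1" "b \<in> C4" | "a \<in> C2" "b \<in> C3" | "a \<in> C2" "b \<in> C4"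
      using ab by (auto simp: C1_def C2_def C3_def C4_def)
    then show ?thesis
    proof cases
      case 1 then show ?thesis using fC1 fC4 e2(1) by auto
    next
      case 2 then show ?thesis using fC2 fC3 e2(3) by auto
    next
      case 3
      then have "{f b, f a} \<in> edges G" using fC2 fC4 e2(2) by auto
      then show ?thesis by (simp add: insert_commute)
    qed
  qed
  have edg: "f ` F \<in> edges G" if F: "F \<in> edges H" for F
  proof -
    have "card F \<in> R H" using F by (simp add: R_def)
    then have "card F = 1 \<or> card F = 2" using RH by auto
    then show ?thesis
    proof
      assume "card F = 1"
      then obtain x where Fx: "F = {x}" by (auto simp: card_1_singleton_iff)
      have xv: "x \<in> verts H" using F Fx hH by (auto simp: is_hypergraph_def)
      then have "x \<in> T" using F Fx by (simp add: T_def)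
      then have "x \<in> C1 \<or> x \<in> C3" using xv XY by (auto simp: C1_def C3_def)
      then show ?thesis using Fx fC1 fC3 e1 by auto
    next
      assume c2: "card F = 2"
      then obtain x y where Fxy: "F = {x,y}" "x \<noteq> y" by (auto simp: card_2_iff)
      have xv: "x \<in> verts H" "y \<in> verts H" using F Fxy hH by (auto simp: is_hypergraph_def)
      have cX: "card (F \<inter> X) = 1" using bp F c2 by auto
      have "(x \<in> X \<and> y \<in> Y) \<or> (y \<in> X \<and> x \<in> Y)"
      proof (rule ccontr)
        assume nn: "\<not> ?thesis"
        then have "(x \<in> X \<and> y \<in> X) \<or> (x \<in> Y \<and> y \<in> Y)" using xv XY by auto
        then show False
        proof
          assume "x \<in> X \<and> y \<in> X"
          then have "F \<inter> X = {x,y}" using Fxy by auto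
          then show False using cX Fxy by simp
        next
          assume "x \<in> Y \<and> y \<in> Y"
          then have "F \<inter> X = {}" using Fxy XY by auto
          then show False using cX by simp
        qed
      qed
      then show ?thesis
      proof
        assume "x \<in> X \<and> y \<in> Y"
        then show ?thesis using XYedge[of x y] F Fxy by auto
      next
        assume "y \<in> X \<and> x \<in> Y"
        then show ?thesis using XYedge[of y x] F Fxy by (auto simp: insert_commute)
      qed
    qed
  qed
  show ?thesis unfolding subgraph_def using inj img edg by blast
qed




definition Aset :: "nat hgraph \<Rightarrow> nat set" where "Aset G = {x\<in>verts G. {x} \<in> edges G}"
definition Nb :: "nat hgraph \<Rightarrow> nat \<Rightarrow> nat set" where "Nb G z = {u\<in>Aset G. u \<noteq> z \<and> {u,z} \<in> edges G}"
definition Ysm :: "nat hgraph \<Rightarrow> nat \<Rightarrow> real \<Rightarrow> nat set" where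
  "Ysm G n d = {z\<in>{0..<n}. real (card (Nb G z)) \<ge> d * real n}"
definition Mset :: "nat hgraph \<Rightarrow> nat \<Rightarrow> real \<Rightarrow> nat set set" where
  "Mset G n d = {F\<in>edges G. card F = 2 \<and> F \<subseteq> Ysm G n d}"
definition Sset :: "nat hgraph \<Rightarrow> nat \<Rightarrow> (nat \<times> nat \<times> nat \<times> nat) set" where
  "Sset G n = {(u,z,w,v). u \<in> {0..<n} \<and> z \<in> {0..<n} \<and> w \<in> {0..<n} \<and> v \<in> {0..<n} \<and>
     u \<noteq> z \<and> u \<noteq> w \<and> u \<noteq> v \<and> z \<noteq> w \<and> z \<noteq> v \<and> w \<noteq> v \<and>
     u \<in> Aset G \<and> v \<in> Aset G \<and> {u,z} \<in> edges G \<and> {z,w} \<in> edges G \<and> {w,v} \<in> edges G}"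

lemma real_card_diff_ge: "finite A \<Longrightarrow> finite B \<Longrightarrow> real (card (A - B)) \<ge> real (card A) - real (card B)"
  using card_diff_ge[of A B] by linarith

lemma S_large:
  assumes vG: "verts G = {0..<n}" and d: "d > 0" and dn: "d * real n \<ge> 4"
    and M: "real (card (Mset G n d)) \<ge> g * real n ^ 2" and g: "g \<ge> 0"
  shows "real (card (Sset G n)) \<ge> g * d^2 / 4 * real n ^ 4"
proof -
  define Y where "Y = Ysm G n d"
  have AS: "Aset G \<subseteq> {0..<n}" using vG by (auto simp: Aset_def)
  have NbS: "Nb G z \<subseteq> {0..<n}" for z using AS by (auto simp: Nb_def)
  have finNb: "finite (Nb G z)" for z using NbS finite_subset by blast
  define M' where "M' = {(z,w). z \<in> Y \<and> w \<in> Y \<and> z \<noteq> w \<and> {z,w} \<in> edges G}"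
  have YS: "Y \<subseteq> {0..<n}" by (auto simp: Y_def Ysm_def)
  have finM': "finite M'" by (rule finite_subset[of _ "Y \<times> Y"]) (use YS finite_subset in \<open>auto simp: M'_def\<close>)
  have "Mset G n d \<subseteq> (\<lambda>(z,w). {z,w}) ` M'"
  proof
    fix F assume F: "F \<in> Mset G n d"
    then obtain z w where "F = {z,w}" "z \<noteq> w" by (auto simp: Mset_def card_2_iff)
    then show "F \<in> (\<lambda>(z,w). {z,w}) ` M'" using F by (auto simp: Mset_def M'_def Y_def image_iff)
  qed
  then have "card (Mset G n d) \<le> card M'" using finM' by (meson card_image_le card_mono finite_imageI le_trans)
  then have cM': "real (card M') \<ge> g * real n ^ 2" using M by linarith
  define I where "I p = Sigma (Nb G (fst p) - {snd p}) (\<lambda>u. Nb G (snd p) - {fst p, u})" for p :: "nat \<times> nat"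
  define Big where "Big = Sigma M' I"
  define gm where "gm = (\<lambda>(p::nat\<times>nat, q::nat\<times>nat). (fst q, fst p, snd p, snd q))"
  have inj: "inj_on gm Big" by (auto simp: inj_on_def gm_def)
  have sub: "gm ` Big \<subseteq> Sset G n"
  proof
    fix x assume "x \<in> gm ` Big"
    then obtain z w u v where x: "x = (u,z,w,v)" "(z,w) \<in> M'" "u \<in> Nb G z" "u \<noteq> w" "v \<in> Nb G w" "v \<noteq> z" "v \<noteq> u"
      by (auto simp: gm_def Big_def I_def)
    have "{v,w} \<in> edges G" using x by (simp add: Nb_def)
    then have "{w,v} \<in> edges G" by (simp add: insert_commute)
    then show "x \<in> Sset G n" using x YS AS NbS by (auto simp: Sset_def M'_def Nb_def)
  qed
  have finS: "finite (Sset G n)"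
    by (rule finite_subset[of _ "{0..<n} \<times> {0..<n} \<times> {0..<n} \<times> {0..<n}"]) (auto simp: Sset_def)
  have "card Big \<le> card (Sset G n)"
    using card_image[OF inj] card_mono[OF finS sub] by simp
  moreover have "real (card Big) \<ge> g * d^2 / 4 * real n ^ 4"
  proof -
    have finI: "finite (I p)" for p using finNb by (simp add: I_def)
    have u1: "real (card Big) = (\<Sum>p\<in>M'. real (card (I p)))"
      using finM' finI by (simp add: Big_def card_SigmaI)
    have u2: "(\<Sum>p\<in>M'. real (card (I p))) \<ge> (\<Sum>p\<in>M'. (d * real n / 2)^2)"
    proof (rule sum_mono)
      fix p assume p: "p \<in> M'"
      then obtain z w where zw: "p = (z,w)" "z \<in> Y" "w \<in> Y" by (auto simp: M'_def)
      have cz: "real (card (Nb G z)) \<ge> d * real n" "real (card (Nb G w)) \<ge> d * real n"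
        using zw by (auto simp: Y_def Ysm_def)
      have t1: "real (card (I p)) = (\<Sum>u\<in>Nb G z - {w}. real (card (Nb G w - {z,u})))"
        using finNb by (simp add: I_def zw card_SigmaI)
      have t2: "(\<Sum>u\<in>Nb G z - {w}. real (card (Nb G w - {z,u}))) \<ge> (\<Sum>u\<in>Nb G z - {w}. d * real n - 2)"
      proof (rule sum_mono)
        fix u
        have "real (card (Nb G w - {z,u})) \<ge> real (card (Nb G w)) - real (card {z,u})"
          using finNb by (intro real_card_diff_ge) auto
        moreover have "real (card {z,u}) \<le> 2" by (simp add: card_insert_if)
        ultimately show "real (card (Nb G w - {z, u})) \<ge> d * real n - 2" using cz by linarith
      qed
      have t3: "(\<Sum>u\<in>Nb G z - {w}. d * real n - 2) = real (card (Nb G z - {w})) * (d * real n - 2)" by simp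
      have t4: "real (card (Nb G z - {w})) * (d * real n - 2) \<ge> (d * real n - 1) * (d * real n - 2)"
      proof (rule mult_right_mono)
        have "real (card (Nb G z - {w})) \<ge> real (card (Nb G z)) - real (card {w})"
          using finNb by (intro real_card_diff_ge) auto
        then show "d * real n - 1 \<le> real (card (Nb G z - {w}))" using cz by simp
      qed (use dn in simp)
      have t5: "(d * real n - 1) * (d * real n - 2) \<ge> (d * real n / 2)^2"
      proof -
        define x where "x = d * real n"
        have "x \<ge> 4" using dn by (simp add: x_def)
        then have "(x - 1) * (x - 2) - (x/2)^2 = 3 * x * (x/4 - 1) + 2" by (simp add: algebra_simps power2_eq_square)
        moreover have "3 * x * (x/4 - 1) \<ge> 0" using \<open>x \<ge> 4\<close> by simp
        ultimately show ?thesis unfolding x_def[symmetric] by linarith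
      qed
      show "(d * real n / 2)^2 \<le> real (card (I p))" using t1 t2 t3 t4 t5 by linarith
    qed
    have u3: "(\<Sum>p\<in>M'. (d * real n / 2)^2) = real (card M') * (d * real n / 2)^2" by simp
    have u4: "real (card M') * (d * real n / 2)^2 \<ge> (g * real n ^ 2) * (d * real n / 2)^2" using cM' by (intro mult_right_mono) auto
    have u5: "(g * real n ^ 2) * (d * real n / 2)^2 = g * d^2 / 4 * real n ^ 4"
      by (simp add: power2_eq_square power4_eq_xxxx)
    show ?thesis using u1 u2 u3 u4 u5 by linarith
  qed
  ultimately show ?thesis by linarith
qed




lemma arith_main:
  fixes N P Q e2 g d :: real
  assumes N: "N \<ge> 2" and P: "P \<ge> 0" and Q: "Q \<ge> 0" and PQ: "P + Q \<le> N"
    and e2: "e2 \<le> (g + d) * N^2 + P * (P - 1) / 2 + (N - Q) * Q" and gd: "g + d \<ge> 0"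
  shows "(N - P - Q) / N + e2 * 2 / (N * (N - 1)) \<le> 9/8 + 4 * (g + d) + 1 / (2 * (N - 1))"
proof -
  have N1: "N - 1 > 0" "N > 0" using N by auto
  have i: "e2 * 2 / (N * (N - 1)) \<le> 2 * (g + d) * N^2 / (N * (N - 1)) + P * (P - 1) / (N * (N - 1)) + 2 * (N - Q) * Q / (N * (N - 1))"
    using e2 N1 by (simp add: divide_simps) (simp add: algebra_simps)
  have ii: "2 * (g + d) * N^2 / (N * (N - 1)) \<le> 4 * (g + d)"
  proof -
    have "2 * (g + d) * N^2 \<le> 4 * (g + d) * (N * (N - 1))"
    proof -
      have "2 * (N * (N - 1)) - N^2 = N * (N - 2)" by (simp add: power2_eq_square algebra_simps)
      moreover have "N * (N - 2) \<ge> 0" using N by simp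
      ultimately have "N^2 \<le> 2 * (N * (N - 1))" by linarith
      from mult_left_mono[OF this, of "2*(g+d)"] gd show ?thesis by (simp add: algebra_simps)
    qed
    then show ?thesis using N1 by (simp add: divide_simps)
  qed
  have iii: "P * (P - 1) / (N * (N - 1)) \<le> P^2 / N^2"
  proof -
    have "P * (P - 1) * N^2 \<le> P^2 * (N * (N - 1))"
    proof -
      have "P^2 * (N * (N - 1)) - P * (P - 1) * N^2 = P * N * (N - P)" by (simp add: algebra_simps power2_eq_square)
      moreover have "P * N * (N - P) \<ge> 0" using P N1 PQ Q by simp
      ultimately show ?thesis by linarith
    qed
    then show ?thesis using N1 by (simp add: divide_simps)
  qed
  have iv: "2 * (N - Q) * Q / (N * (N - 1)) \<le> 2 * (N - Q) * Q / N^2 + 1 / (2 * (N - 1))"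
  proof -
    have eq: "2 * (N - Q) * Q / (N * (N - 1)) = 2 * (N - Q) * Q / N^2 + 2 * (N - Q) * Q / (N^2 * (N - 1))"
      using N1 by (simp add: divide_simps) (simp add: algebra_simps power2_eq_square)
    have "2 * (N - Q) * Q \<le> N^2 / 2"
    proof -
      have "N^2 / 2 - 2 * (N - Q) * Q = 2 * (Q - N/2)^2" by (simp add: algebra_simps power2_eq_square)
      then show ?thesis by (smt (verit) zero_le_power2)
    qed
    then have "2 * (N - Q) * Q / (N^2 * (N - 1)) \<le> (N^2/2) / (N^2 * (N - 1))"
      using N1 by (intro divide_right_mono) auto
    also have "(N^2/2) / (N^2 * (N - 1)) = 1 / (2 * (N - 1))" using N1 by (simp add: divide_simps)
    finally show ?thesis using eq by linarith
  qed
  have v: "(N - P - Q) / N + P^2 / N^2 + 2 * (N - Q) * Q / N^2 \<le> 9/8"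
  proof -
    have "P^2 \<le> P * (N - Q)" using P PQ by (simp add: power2_eq_square mult_left_mono)
    then have a: "P^2 - P * N \<le> 0" using P Q by (smt (verit) mult_nonneg_nonneg right_diff_distrib)
    have b: "9/8 * N^2 - (N^2 + N * Q - 2 * Q^2) = 2 * (Q - N/4)^2" by (simp add: algebra_simps power2_eq_square)
    have "(N - P - Q) / N + P^2 / N^2 + 2 * (N - Q) * Q / N^2 = ((N - P - Q) * N + P^2 + 2 * (N - Q) * Q) / N^2"
      using N1 by (simp add: divide_simps power2_eq_square)
    also have "(N - P - Q) * N + P^2 + 2 * (N - Q) * Q = (N^2 + N * Q - 2 * Q^2) + (P^2 - P * N)"
      by (simp add: algebra_simps power2_eq_square)
    also have "\<dots> \<le> 9/8 * N^2" using a b by (smt (verit) zero_le_power2)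
    finally show ?thesis using N1 by (simp add: divide_simps)
  qed
  show ?thesis using i ii iii iv v by linarith
qed




lemma real_choose2: "real (m choose 2) = real m * (real m - 1) / 2"
proof (induction m)
  case 0 then show ?case by simp
next
  case (Suc m)
  have "Suc m choose 2 = m + (m choose 2)"
    by (metis Suc_1 binomial_Suc_Suc choose_one)
  then show ?case using Suc by (simp add: algebra_simps)
qed

lemma h_bound:
  assumes vG: "verts G = {0..<n}" and hG: "is_hypergraph G" and RG: "R G \<subseteq> {1,2}"
    and n: "n \<ge> 2" and d: "d > 0" and g: "g \<ge> 0"
    and M: "real (card (Mset G n d)) \<le> g * real n ^ 2"
  shows "h n G \<le> 9/8 + 4 * (g + d) + 1 / (2 * (real n - 1))"
proof -
  define E where "E = edges G"
  have EP: "E \<subseteq> Pow {0..<n}" using hG vG by (auto simp: E_def is_hypergraph_def)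
  have finE: "finite E" using EP by (meson finite_Pow_iff finite_atLeastLessThan finite_subset)
  have Ecard: "card F = 1 \<or> card F = 2" if "F \<in> E" for F using that RG by (auto simp: R_def E_def)
  define E1 where "E1 = {F\<in>E. card F = 1}"
  define E2 where "E2 = {F\<in>E. card F = 2}"
  have EU: "E = E1 \<union> E2" using Ecard by (auto simp: E1_def E2_def)
  have fin12: "finite E1" "finite E2" using finE by (auto simp: E1_def E2_def)
  have disj: "E1 \<inter> E2 = {}" by (auto simp: E1_def E2_def)
  define A where "A = Aset G"
  have AS: "A \<subseteq> {0..<n}" using vG by (auto simp: A_def Aset_def)
  have E1A: "E1 = (\<lambda>x. {x}) ` A"
  proof
    show "E1 \<subseteq> (\<lambda>x. {x}) ` A"
    proof
      fix F assume F: "F \<in> E1"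
      then obtain x where Fx: "F = {x}" by (auto simp: E1_def card_1_singleton_iff)
      then have "x \<in> {0..<n}" using F EP by (auto simp: E1_def)
      then show "F \<in> (\<lambda>x. {x}) ` A" using F Fx vG by (auto simp: E1_def A_def Aset_def E_def)
    qed
    show "(\<lambda>x. {x}) ` A \<subseteq> E1" by (auto simp: E1_def A_def Aset_def E_def)
  qed
  have cE1: "card E1 = card A" unfolding E1A by (rule card_image) (auto simp: inj_on_def)
  have hval: "h n G = real (card E1) / real n + real (card E2) * 2 / (real n * (real n - 1))"
  proof -
    have "h n G = (\<Sum>F\<in>E1. 1 / real (n choose card F)) + (\<Sum>F\<in>E2. 1 / real (n choose card F))"
      unfolding h_def E_def[symmetric] EU using fin12 disj by (simp add: sum.union_disjoint)
    also have "(\<Sum>F\<in>E1. 1 / real (n choose card F)) = (\<Sum>F\<in>E1. 1 / real n)"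
      by (rule sum.cong) (auto simp: E1_def)
    also have "(\<Sum>F\<in>E2. 1 / real (n choose card F)) = (\<Sum>F\<in>E2. 2 / (real n * (real n - 1)))"
      by (rule sum.cong) (auto simp: E2_def real_choose2)
    finally show ?thesis by simp
  qed
  define Y where "Y = Ysm G n d"
  define Z0 where "Z0 = {0..<n} - Y"
  have YS: "Y \<subseteq> {0..<n}" by (auto simp: Y_def Ysm_def)
  have Z0small: "real (card (Nb G z)) < d * real n" if "z \<in> Z0" for z
    using that by (auto simp: Z0_def Y_def Ysm_def)
  define B1 where "B1 = (\<lambda>(z,u). {z,u}) ` Sigma Z0 (Nb G)"
  define Pp where "Pp = {F. F \<subseteq> Z0 - A \<and> card F = 2}"
  define Qq where "Qq = (\<lambda>(z,y). {z,y}) ` (Z0 \<times> (Y - A))"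
  have NbS: "Nb G z \<subseteq> {0..<n}" for z using AS by (auto simp: Nb_def A_def)
  have finNb: "finite (Nb G z)" for z using NbS finite_subset by blast
  have finZ0: "finite Z0" by (simp add: Z0_def)
  have finY: "finite Y" using YS finite_subset by blast
  have E2sub: "E2 \<subseteq> Mset G n d \<union> B1 \<union> Pp \<union> Qq"
  proof
    fix F assume F: "F \<in> E2"
    then obtain x y where Fxy: "F = {x,y}" "x \<noteq> y" by (auto simp: E2_def card_2_iff)
    have FE: "{x,y} \<in> edges G" using F Fxy by (auto simp: E2_def E_def)
    have xyS: "x \<in> {0..<n}" "y \<in> {0..<n}" using F Fxy EP by (auto simp: E2_def)
    have B1I: "{a,b} \<in> B1" if "a \<in> Z0" "b \<in> A" "{a,b} \<in> edges G" "a \<noteq> b" for a b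
    proof -
      have "{b,a} \<in> edges G" using that by (simp add: insert_commute)
      then have "b \<in> Nb G a" using that by (auto simp: Nb_def A_def)
      then show ?thesis using that(1) by (force simp: B1_def)
    qed
    have FE': "{y,x} \<in> edges G" using FE by (simp add: insert_commute)
    show "F \<in> Mset G n d \<union> B1 \<union> Pp \<union> Qq"
    proof (cases "x \<in> Y \<and> y \<in> Y")
      case True then show ?thesis using F Fxy by (auto simp: Mset_def E2_def E_def Y_def)
    next
      case False
      then have "x \<in> Z0 \<or> y \<in> Z0" using xyS by (auto simp: Z0_def)
      then show ?thesis
      proof
        assume xZ: "x \<in> Z0"
        show ?thesis
        proof (cases "y \<in> A")
          case True then show ?thesis using B1I[OF xZ True FE Fxy(2)] Fxy by simp
        next
          case yA: False
          show ?thesis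
          proof (cases "y \<in> Z0")
            case True
            show ?thesis
            proof (cases "x \<in> A")
              case True
              then have "{y,x} \<in> B1" using B1I[OF \<open>y \<in> Z0\<close> True FE'] Fxy by simp
              then show ?thesis using Fxy by (simp add: insert_commute)
            next
              case False
              then have "F \<in> Pp" using Fxy xZ \<open>y \<in> Z0\<close> yA by (auto simp: Pp_def)
              then show ?thesis by simp
            qed
          next
            case False
            then have "y \<in> Y" using xyS by (auto simp: Z0_def)
            then have "F \<in> Qq" using xZ yA Fxy by (force simp: Qq_def)
            then show ?thesis by simp
          qed
        qed
      next
        assume yZ: "y \<in> Z0"
        show ?thesis
        proof (cases "x \<in> A")
          case True then have "{y,x} \<in> B1" using B1I[OF yZ True FE'] Fxy by simp
          then show ?thesis using Fxy by (simp add: insert_commute)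
        next
          case xA: False
          show ?thesis
          proof (cases "x \<in> Z0")
            case True
            show ?thesis
            proof (cases "y \<in> A")
              case True
              then have "{x,y} \<in> B1" using B1I[OF \<open>x \<in> Z0\<close> True FE] Fxy by simp
              then show ?thesis using Fxy by simp
            next
              case False
              then have "F \<in> Pp" using Fxy yZ \<open>x \<in> Z0\<close> xA by (auto simp: Pp_def)
              then show ?thesis by simp
            qed
          next
            case False
            then have "x \<in> Y" using xyS by (auto simp: Z0_def)
            then have "{y,x} \<in> Qq" using yZ xA by (force simp: Qq_def)
            then show ?thesis using Fxy by (simp add: insert_commute)
          qed
        qed
      qed
    qed
  qed
  have finM: "finite (Mset G n d)" using finE by (auto simp: Mset_def E_def)
  have finB1: "finite B1" using finZ0 finNb by (simp add: B1_def)
  have finPp: "finite Pp" using finZ0 by (simp add: Pp_def)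
  have finQq: "finite Qq" using finZ0 finY by (simp add: Qq_def)
  have "card E2 \<le> card (Mset G n d \<union> B1 \<union> Pp \<union> Qq)" using E2sub finM finB1 finPp finQq by (intro card_mono) auto
  also have "\<dots> \<le> card (Mset G n d) + card B1 + card Pp + card Qq"
    by (meson add_le_mono card_Un_le le_trans order_refl)
  finally have cE2: "card E2 \<le> card (Mset G n d) + card B1 + card Pp + card Qq" .
  define p where "p = card (Z0 - A)"
  define q where "q = card (Y - A)"
  define s where "s = card Z0"
  have cB1: "real (card B1) \<le> real s * (d * real n)"
  proof -
    have "card B1 \<le> card (Sigma Z0 (Nb G))" unfolding B1_def by (rule card_image_le) (use finZ0 finNb in auto)
    then have "real (card B1) \<le> (\<Sum>z\<in>Z0. real (card (Nb G z)))" using finZ0 finNb by (simp add: card_SigmaI flip: of_nat_sum)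
    also have "\<dots> \<le> (\<Sum>z\<in>Z0. d * real n)" by (rule sum_mono) (use Z0small in \<open>auto intro: less_imp_le\<close>)
    finally show ?thesis by (simp add: s_def)
  qed
  have cPp: "real (card Pp) = real p * (real p - 1) / 2"
    unfolding Pp_def p_def using n_subsets[of "Z0 - A" 2] finZ0 by (simp add: real_choose2)
  have cQq: "card Qq \<le> s * q"
    unfolding Qq_def s_def q_def by (metis card_cartesian_product card_image_le finite_cartesian_product finZ0 finY finite_Diff)
  have partn: "card A + p + q = n"
  proof -
    have "{0..<n} = A \<union> (Z0 - A) \<union> (Y - A)" using AS YS by (auto simp: Z0_def)
    then have "card {0..<n} = card (A \<union> (Z0 - A) \<union> (Y - A))" by simp
    also have "\<dots> = card (A \<union> (Z0 - A)) + card (Y - A)"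
      using AS finZ0 finY finite_subset by (intro card_Un_disjoint) (auto simp: Z0_def)
    also have "card (A \<union> (Z0 - A)) = card A + card (Z0 - A)"
      using AS finZ0 finite_subset by (intro card_Un_disjoint) auto
    finally show ?thesis by (simp add: p_def q_def)
  qed
  have sYn: "s + card Y = n"
  proof -
    have "card Z0 = n - card Y" unfolding Z0_def using YS by (simp add: card_Diff_subset finY)
    moreover have "card Y \<le> n" using YS by (metis card_atLeastLessThan card_mono finite_atLeastLessThan diff_zero)
    ultimately show ?thesis by (simp add: s_def)
  qed
  have qY: "q \<le> card Y" unfolding q_def using finY by (simp add: card_mono)
  have sle: "real s \<le> real n - real q" using sYn qY by linarith
  have e2b: "real (card E2) \<le> (g + d) * real n ^ 2 + real p * (real p - 1) / 2 + (real n - real q) * real q"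
  proof -
    have "real (card E2) \<le> real (card (Mset G n d)) + real (card B1) + real (card Pp) + real (card Qq)"
      using cE2 by linarith
    moreover have "real (card Qq) \<le> real s * real q" using cQq by (metis of_nat_le_iff of_nat_mult)
    moreover have "real s * real q \<le> (real n - real q) * real q" using sle by (simp add: mult_right_mono)
    moreover have "real s * (d * real n) \<le> d * real n ^ 2"
    proof -
      have "real s \<le> real n" using sle by simp
      then have "real s * real n \<le> real n * real n" by (simp add: mult_right_mono)
      then have "d * (real s * real n) \<le> d * (real n * real n)" using d by (simp add: mult_left_mono)
      then show ?thesis by (simp add: power2_eq_square algebra_simps)
    qed
    ultimately show ?thesis using M cB1 cPp by (simp add: algebra_simps)
  qed
  have "real (card A) = real n - real p - real q" using partn by linarith
  then have "h n G = (real n - real p - real q) / real n + real (card E2) * 2 / (real n * (real n - 1))"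
    using hval cE1 by simp
  also have "\<dots> \<le> 9/8 + 4 * (g + d) + 1 / (2 * (real n - 1))"
    by (rule arith_main[OF _ _ _ _ e2b]) (use n partn g d in auto)
  finally show ?thesis .
qed




lemma upper:
  fixes H :: "'a hgraph"
  assumes hH: "is_hypergraph H" and RH: "R H = {1,2}" and bip: "two_graph_bipartite H"
    and nK: "\<not> subgraph K2_12 H" and eps: "\<epsilon> > 0"
  shows "\<exists>N. \<forall>n\<ge>N. \<forall>G :: nat hgraph. verts G = {0..<n} \<and> is_hypergraph G \<and> R G \<subseteq> R H \<and> \<not> subgraph H G
           \<longrightarrow> h n G \<le> 9/8 + \<epsilon>"
proof -
  define d where "d = min (\<epsilon>/16) (1/2)"
  have d: "d > 0" "d \<le> 1/2" "d \<le> \<epsilon>/16" using eps by (auto simp: d_def)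
  define c where "c = d * d^2 / 4"
  have dd: "d * d \<le> 1" using d by (intro mult_le_one) auto
  have "d * (d * d) \<le> 1" using d dd by (intro mult_le_one) auto
  then have c: "c > 0" "c \<le> 1" using d by (auto simp: c_def power2_eq_square)
  define t where "t = card (verts H)"
  have t: "t \<ge> 1"
  proof -
    have "1 \<in> R H" using RH by simp
    then obtain F where F: "F \<in> edges H" "card F = 1" by (auto simp: R_def)
    then obtain x where "F = {x}" by (auto simp: card_1_singleton_iff)
    then have "x \<in> verts H" using F hH by (auto simp: is_hypergraph_def)
    then have "verts H \<noteq> {}" by auto
    then show ?thesis using hH by (simp add: t_def is_hypergraph_def Suc_le_eq card_gt_0_iff)
  qed
  obtain N1 where N1: "\<forall>n\<ge>N1. \<forall>S. S \<subseteq> {0..<n} \<times> {0..<n} \<times> {0..<n} \<times> {0..<n} \<and> real (card S) \<ge> c * real n ^ 4 \<longrightarrow>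
     (\<exists>U Z W V. U \<subseteq> {0..<n} \<and> Z \<subseteq> {0..<n} \<and> W \<subseteq> {0..<n} \<and> V \<subseteq> {0..<n} \<and>
        card U = t \<and> card Z = t \<and> card W = t \<and> card V = t \<and> U \<times> Z \<times> W \<times> V \<subseteq> S)"
    using box4[OF c t] by blast
  define N where "N = N1 + nat \<lceil>4 / d\<rceil> + nat \<lceil>1 / \<epsilon>\<rceil> + 2"
  show ?thesis
  proof (intro exI[of _ N] allI impI)
    fix n and G :: "nat hgraph"
    assume n: "N \<le> n" and G: "verts G = {0..<n} \<and> is_hypergraph G \<and> R G \<subseteq> R H \<and> \<not> subgraph H G"
    have vG: "verts G = {0..<n}" and hG: "is_hypergraph G" and RG: "R G \<subseteq> {1,2}" and nsub: "\<not> subgraph H G"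
      using G RH by auto
    have n2: "n \<ge> 2" using n by (simp add: N_def)
    have nN1: "n \<ge> N1" using n by (simp add: N_def)
    have dn: "d * real n \<ge> 4"
    proof -
      have "4 / d \<le> real n" using n by (simp add: N_def) linarith
      then show ?thesis using d by (simp add: divide_simps mult.commute)
    qed
    have en: "1 / \<epsilon> \<le> real n - 1" using n by (simp add: N_def) linarith
    show "h n G \<le> 9/8 + \<epsilon>"
    proof (cases "real (card (Mset G n d)) \<le> d * real n ^ 2")
      case True
      have hb: "h n G \<le> 9/8 + 4 * (d + d) + 1 / (2 * (real n - 1))"
        by (rule h_bound[OF vG hG RG n2 d(1) _ True]) (use d in simp)
      have "1 / (2 * (real n - 1)) \<le> \<epsilon> / 2"
      proof -
        have pos: "real n - 1 > 0" using n2 by simp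
        have "1 \<le> \<epsilon> * (real n - 1)" using en eps by (simp add: divide_simps mult.commute)
        moreover have "\<epsilon> * (2 * real n - 2) = 2 * (\<epsilon> * (real n - 1))" by (simp add: algebra_simps)
        ultimately have "2 \<le> \<epsilon> * (2 * real n - 2)" by linarith
        then show ?thesis using pos by (simp add: divide_simps)
      qed
      moreover have "4 * (d + d) = 8 * d" by simp
      ultimately show ?thesis using hb d by linarith
    next
      case False
      have Sl: "real (card (Sset G n)) \<ge> d * d^2 / 4 * real n ^ 4"
        by (rule S_large[OF vG d(1) dn]) (use False d in auto)
      have Ssub: "Sset G n \<subseteq> {0..<n} \<times> {0..<n} \<times> {0..<n} \<times> {0..<n}" by (auto simp: Sset_def)
      have Sl': "real (card (Sset G n)) \<ge> c * real n ^ 4" using Sl by (simp add: c_def)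
      have "\<exists>U Z W V. U \<subseteq> {0..<n} \<and> Z \<subseteq> {0..<n} \<and> W \<subseteq> {0..<n} \<and> V \<subseteq> {0..<n} \<and>
        card U = t \<and> card Z = t \<and> card W = t \<and> card V = t \<and> U \<times> Z \<times> W \<times> V \<subseteq> Sset G n"
        by (rule N1[rule_format, OF nN1]) (use Ssub Sl' in blast)
      then obtain U Z W V where UZWV: "U \<subseteq> {0..<n}" "Z \<subseteq> {0..<n}" "W \<subseteq> {0..<n}" "V \<subseteq> {0..<n}"
        "card U = t" "card Z = t" "card W = t" "card V = t" and box: "U \<times> Z \<times> W \<times> V \<subseteq> Sset G n"
        by (elim exE conjE)
      have fin: "finite U" "finite Z" "finite W" "finite V" using UZWV(1-4) by (meson finite_atLeastLessThan finite_subset)+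
      have ne: "U \<noteq> {}" "Z \<noteq> {}" "W \<noteq> {}" "V \<noteq> {}" using UZWV(5-8) t by auto
      have mem: "u \<noteq> z \<and> u \<noteq> w \<and> u \<noteq> v \<and> z \<noteq> w \<and> z \<noteq> v \<and> w \<noteq> v \<and>
             u \<in> Aset G \<and> v \<in> Aset G \<and> {u,z} \<in> edges G \<and> {z,w} \<in> edges G \<and> {w,v} \<in> edges G"
        if "u \<in> U" "z \<in> Z" "w \<in> W" "v \<in> V" for u z w v
      proof -
        have "(u,z,w,v) \<in> Sset G n" using box that by blast
        then show ?thesis unfolding Sset_def by simp
      qed
      obtain u0 z0 w0 v0 where p0: "u0 \<in> U" "z0 \<in> Z" "w0 \<in> W" "v0 \<in> V" using ne by blast
      have d1: "U \<inter> Z = {}"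
      proof -
        { fix x assume "x \<in> U" "x \<in> Z" then have False using mem[of x x w0 v0] p0 by simp }
        then show ?thesis by blast
      qed
      have d2: "U \<inter> W = {}"
      proof -
        { fix x assume "x \<in> U" "x \<in> W" then have False using mem[of x z0 x v0] p0 by simp }
        then show ?thesis by blast
      qed
      have d3: "U \<inter> V = {}"
      proof -
        { fix x assume "x \<in> U" "x \<in> V" then have False using mem[of x z0 w0 x] p0 by simp }
        then show ?thesis by blast
      qed
      have d4: "Z \<inter> W = {}"
      proof -
        { fix x assume "x \<in> Z" "x \<in> W" then have False using mem[of u0 x x v0] p0 by simp }
        then show ?thesis by blast
      qed
      have d5: "Z \<inter> V = {}"
      proof -
        { fix x assume "x \<in> Z" "x \<in> V" then have False using mem[of u0 x w0 x] p0 by simp }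
        then show ?thesis by blast
      qed
      have d6: "W \<inter> V = {}"
      proof -
        { fix x assume "x \<in> W" "x \<in> V" then have False using mem[of u0 z0 x x] p0 by simp }
        then show ?thesis by blast
      qed
      have g1: "\<forall>u\<in>U. {u} \<in> edges G"
      proof
        fix u assume "u \<in> U" then have "u \<in> Aset G" using mem[of u z0 w0 v0] p0 by simp
        then show "{u} \<in> edges G" by (simp add: Aset_def)
      qed
      have g2: "\<forall>v\<in>V. {v} \<in> edges G"
      proof
        fix v assume "v \<in> V" then have "v \<in> Aset G" using mem[of u0 z0 w0 v] p0 by simp
        then show "{v} \<in> edges G" by (simp add: Aset_def)
      qed
      have g3: "\<forall>u\<in>U. \<forall>z\<in>Z. {u,z} \<in> edges G"
      proof (intro ballI)
        fix u z assume "u \<in> U" "z \<in> Z" then show "{u,z} \<in> edges G" using mem[of u z w0 v0] p0 by simp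
      qed
      have g4: "\<forall>z\<in>Z. \<forall>w\<in>W. {z,w} \<in> edges G"
      proof (intro ballI)
        fix z w assume "z \<in> Z" "w \<in> W" then show "{z,w} \<in> edges G" using mem[of u0 z w v0] p0 by simp
      qed
      have g5: "\<forall>w\<in>W. \<forall>v\<in>V. {w,v} \<in> edges G"
      proof (intro ballI)
        fix w v assume "w \<in> W" "v \<in> V" then show "{w,v} \<in> edges G" using mem[of u0 z0 w v] p0 by simp
      qed
      have cards: "card (verts H) \<le> card U" "card (verts H) \<le> card Z" "card (verts H) \<le> card W" "card (verts H) \<le> card V"
        using UZWV(5-8) by (simp_all add: t_def)
      have vs: "U \<union> Z \<union> W \<union> V \<subseteq> verts G" using UZWV(1-4) vG by blast
      have "subgraph H G"
        by (rule embed[OF hH RH bip nK fin cards d1 d2 d3 d4 d5 d6 vs g1 g2 g3 g4 g5])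
      then show ?thesis using nsub by simp
    qed
  qed
qed




definition m34 :: "nat \<Rightarrow> nat" where "m34 n = 3*n div 4"

definition Gc :: "nat \<Rightarrow> nat hgraph" where
  "Gc n = ({0..<n}, (\<lambda>x. {x}) ` {0..<m34 n} \<union> (\<lambda>(x,y). {x,y}) ` ({0..<m34 n} \<times> {m34 n..<n}))"

lemma m34_le: "m34 n \<le> n" by (simp add: m34_def)

lemma Gc_edges: "F \<in> edges (Gc n) \<longleftrightarrow> (\<exists>x. x < m34 n \<and> F = {x}) \<or> (\<exists>x y. x < m34 n \<and> m34 n \<le> y \<and> y < n \<and> F = {x,y})"
proof -
  have a: "F \<in> (\<lambda>x. {x}) ` {0..<m34 n} \<longleftrightarrow> (\<exists>x. x < m34 n \<and> F = {x})" by auto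
  have b: "F \<in> (\<lambda>(x,y). {x,y}) ` ({0..<m34 n} \<times> {m34 n..<n}) \<longleftrightarrow> (\<exists>x y. x < m34 n \<and> m34 n \<le> y \<and> y < n \<and> F = {x,y})"
    by (rule iffI) (force, force)
  show ?thesis unfolding Gc_def edges_def snd_conv Un_iff a b ..
qed

lemma subgraph_trans: "subgraph A B \<Longrightarrow> subgraph B C \<Longrightarrow> subgraph A C"
proof -
  assume "subgraph A B" "subgraph B C"
  then obtain f g where f: "inj_on f (verts A)" "f ` verts A \<subseteq> verts B" "\<forall>F\<in>edges A. f ` F \<in> edges B"
    and g: "inj_on g (verts B)" "g ` verts B \<subseteq> verts C" "\<forall>F\<in>edges B. g ` F \<in> edges C"
    by (auto simp: subgraph_def)
  have "inj_on (g \<circ> f) (verts A)" using f g by (auto intro: comp_inj_on inj_on_subset)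
  moreover have "(g \<circ> f) ` verts A \<subseteq> verts C" using f g by auto
  moreover have "\<forall>F\<in>edges A. g ` (f ` F) \<in> edges C" using f g by blast
  then have "\<forall>F\<in>edges A. (g \<circ> f) ` F \<in> edges C" by (simp add: image_comp)
  ultimately show ?thesis unfolding subgraph_def by (intro exI[of _ "g \<circ> f"]) simp
qed

lemma Gc_hyp: "is_hypergraph (Gc n)"
proof -
  have "edges (Gc n) \<subseteq> Pow {0..<n}"
  proof
    fix F assume "F \<in> edges (Gc n)"
    then show "F \<in> Pow {0..<n}" unfolding Gc_edges using m34_le[of n] by auto
  qed
  moreover have "verts (Gc n) = {0..<n}" by (simp add: Gc_def verts_def)
  ultimately show ?thesis unfolding is_hypergraph_def by simp
qed

lemma Gc_R: "R (Gc n) \<subseteq> {1,2}"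
proof
  fix c assume "c \<in> R (Gc n)"
  then obtain F where "F \<in> edges (Gc n)" "c = card F" by (auto simp: R_def)
  then show "c \<in> {1,2}" unfolding Gc_edges by auto
qed

lemma Gc_e1: "{a} \<in> edges (Gc n) \<Longrightarrow> a < m34 n"
  unfolding Gc_edges by (auto simp: doubleton_eq_iff)

lemma Gc_e2: "{a,b} \<in> edges (Gc n) \<Longrightarrow> a \<noteq> b \<Longrightarrow> (a < m34 n \<longleftrightarrow> \<not> b < m34 n)"
  unfolding Gc_edges by (auto simp: doubleton_eq_iff)

lemma cp_verts: "verts (closed_path m) = {1..m}" by (simp add: closed_path_def verts_def)
lemma cp_edges: "edges (closed_path m) = {{1},{m}} \<union> {{i, i + 1} | i. 1 \<le> i \<and> i \<le> m - 1}"
  by (simp add: closed_path_def edges_def)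

lemma Gc_nopath:
  assumes k: "k \<ge> 1"
  shows "\<not> subgraph (closed_path (2*k)) (Gc n)"
proof
  assume "subgraph (closed_path (2*k)) (Gc n)"
  then obtain f where f1: "inj_on f {1..2*k}" and f2: "\<forall>F\<in>edges (closed_path (2*k)). f ` F \<in> edges (Gc n)"
    unfolding subgraph_def cp_verts by blast
  define m where "m = m34 n"
  have e1: "f 1 < m" "f (2*k) < m"
  proof -
    have "{1} \<in> edges (closed_path (2*k))" "{2*k} \<in> edges (closed_path (2*k))" unfolding cp_edges by blast+
    then have "f ` {1} \<in> edges (Gc n)" "f ` {2*k} \<in> edges (Gc n)" using f2 by blast+
    then have "{f 1} \<in> edges (Gc n)" "{f (2*k)} \<in> edges (Gc n)" by simp_all
    then show "f 1 < m" "f (2*k) < m" unfolding m_def using Gc_e1 by blast+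
  qed
  have step: "f i < m \<longleftrightarrow> \<not> f (i+1) < m" if i: "1 \<le> i" "i + 1 \<le> 2*k" for i
  proof -
    have "i \<le> 2*k - 1" using i by simp
    then have "{i, i+1} \<in> edges (closed_path (2*k))" unfolding cp_edges using i(1) by blast
    then have "f ` {i, i+1} \<in> edges (Gc n)" using f2 by blast
    then have "{f i, f (i+1)} \<in> edges (Gc n)" by simp
    moreover have "f i \<noteq> f (i+1)"
    proof
      assume "f i = f (i+1)"
      moreover have "i \<in> {1..2*k}" "i+1 \<in> {1..2*k}" using i by auto
      ultimately have "i = i + 1" using f1 by (metis inj_onD)
      then show False by simp
    qed
    ultimately show ?thesis unfolding m_def by (rule Gc_e2)
  qed
  have par: "f i < m \<longleftrightarrow> odd i" if "1 \<le> i" "i \<le> 2*k" for i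
    using that
  proof (induction i rule: nat_induct_at_least)
    case base then show ?case using e1 by simp
  next
    case (Suc i)
    have "f i < m \<longleftrightarrow> odd i" using Suc by simp
    moreover have "f i < m \<longleftrightarrow> \<not> f (i+1) < m" using Suc by (intro step) auto
    ultimately show ?case by simp
  qed
  have "\<not> f (2*k) < m" using par[of "2*k"] k by simp
  then show False using e1 by simp
qed

lemma Gc_h:
  assumes n: "n \<ge> 2"
  shows "h n (Gc n) \<ge> 9/8 - 2 / real n ^ 2"
proof -
  define m where "m = m34 n"
  have mn: "m \<le> n" by (simp add: m_def m34_le)
  define E1 where "E1 = (\<lambda>x. {x}) ` {0..<m}"
  define E2 where "E2 = (\<lambda>(x,y). {x,y}) ` ({0..<m} \<times> {m..<n})"
  have E: "edges (Gc n) = E1 \<union> E2" by (simp add: Gc_def edges_def E1_def E2_def m_def)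
  have cE1: "card E1 = m" unfolding E1_def by (subst card_image) (auto simp: inj_on_def)
  have c1: "card F = 1" if "F \<in> E1" for F using that by (auto simp: E1_def)
  have c2: "card F = 2" if F2: "F \<in> E2" for F
  proof -
    from F2 obtain x y where "F = {x,y}" "x < m" "m \<le> y" unfolding E2_def by auto
    then show ?thesis by simp
  qed
  have injE2: "inj_on (\<lambda>(x,y). {x,y}) ({0..<m} \<times> {m..<n})"
  proof (rule inj_onI)
    fix p q assume p: "p \<in> {0..<m} \<times> {m..<n}" and q: "q \<in> {0..<m} \<times> {m..<n}"
      and eq: "(\<lambda>(x,y). {x,y}) p = (\<lambda>(x,y). {x,y}) q"
    obtain a b where ab: "p = (a,b)" "a < m" "m \<le> b" using p by auto
    obtain c d where cd: "q = (c,d)" "c < m" "m \<le> d" using q by auto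
    have "{a,b} = {c,d}" using eq ab cd by simp
    then have "(a = c \<and> b = d) \<or> (a = d \<and> b = c)" by (simp add: doubleton_eq_iff)
    then show "p = q" using ab cd by auto
  qed
  have cE2: "card E2 = m * (n - m)" unfolding E2_def
    using card_image[OF injE2] by (simp add: card_cartesian_product)
  have disj: "E1 \<inter> E2 = {}"
  proof -
    { fix F assume "F \<in> E1" "F \<in> E2"
      then have "card F = 1" "card F = 2" using c1 c2 by blast+
      then have False by simp }
    then show ?thesis by blast
  qed
  have fE1: "finite E1" unfolding E1_def by simp
  have fE2: "finite E2" unfolding E2_def by simp
  have "h n (Gc n) = (\<Sum>F\<in>E1. 1 / real (n choose card F)) + (\<Sum>F\<in>E2. 1 / real (n choose card F))"
    unfolding h_def E by (rule sum.union_disjoint[OF fE1 fE2 disj])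
  also have "(\<Sum>F\<in>E1. 1 / real (n choose card F)) = (\<Sum>F\<in>E1. 1 / real n)"
    by (rule sum.cong) (simp_all add: c1)
  also have "\<dots> = real m / real n" using cE1 by simp
  also have "(\<Sum>F\<in>E2. 1 / real (n choose card F)) = (\<Sum>F\<in>E2. 1 / real (n choose 2))"
    by (rule sum.cong) (simp_all add: c2)
  also have "\<dots> = real (m * (n - m)) / real (n choose 2)" using cE2 by simp
  finally have hv: "h n (Gc n) = real m / real n + real (m * (n - m)) / real (n choose 2)" .
  have nc2: "real (n choose 2) \<le> real n ^ 2 / 2"
  proof -
    have "n choose 2 = n * (n - 1) div 2" by (rule choose_two)
    then have "2 * (n choose 2) \<le> n * (n - 1)" by simp
    also have "\<dots> \<le> n * n" by simp
    finally have "real (2 * (n choose 2)) \<le> real (n * n)" by (simp only: of_nat_le_iff)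
    then show ?thesis by (simp add: power2_eq_square)
  qed
  have ncpos: "real (n choose 2) > 0" using n by simp
  have "real (m * (n - m)) / real (n choose 2) \<ge> real (m * (n - m)) / (real n ^ 2 / 2)"
    using nc2 ncpos by (intro divide_left_mono) auto
  define r where "r = real m / real n"
  have np: "real n > 0" using n by simp
  have eq2: "real (m * (n - m)) / (real n ^ 2 / 2) = 2 * r * (1 - r)"
    using mn np by (simp add: r_def of_nat_diff field_simps power2_eq_square)
  have "4 * m \<le> 3 * n" "3 * n < 4 * m + 4" by (simp_all add: m_def m34_def)
  then have a: "4 * real m \<le> 3 * real n" "3 * real n \<le> 4 * real m + 4" by linarith+
  have r1: "r \<le> 3/4" using a np by (simp add: r_def divide_simps)
  have r2: "3/4 - 1 / real n \<le> r" using a np by (simp add: r_def divide_simps)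
  have "(3/4 - r)^2 \<le> (1 / real n)^2" using r1 r2 by (intro power_mono) auto
  then have "(r - 3/4)^2 \<le> (1 / real n)^2" by (simp add: power2_commute)
  then have sq: "(r - 3/4)^2 \<le> 1 / real n ^ 2" by (simp add: power_divide)
  have "r + 2 * r * (1 - r) = 9/8 - 2 * (r - 3/4)^2" by (simp add: algebra_simps power2_eq_square)
  then show ?thesis using hv \<open>real (m * (n - m)) / real (n choose 2) \<ge> _\<close> eq2 sq r_def by linarith
qed




lemma pi_bounds:
  fixes H :: "'a hgraph"
  assumes fin: "finite Sn" and mem: "a \<in> Sn" and le: "\<forall>x\<in>Sn. x \<le> b"
  shows "a \<le> Max Sn" "Max Sn \<le> b"
proof -
  show "a \<le> Max Sn" using fin mem by simp
  have "Sn \<noteq> {}" using mem by auto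
  then show "Max Sn \<le> b" using fin le by simp
qed

theorem mainTheorem9:
  fixes H :: "'a hgraph" and k :: nat
  assumes "is_hypergraph H"
    and "R H = {1, 2}"
    and "two_graph_bipartite H"
    and "\<not> subgraph K2_12 H"
    and "k \<ge> 1"
    and "subgraph (closed_path (2 * k)) H"
  shows "(\<lambda>n. pi_n H n) \<longlonglongrightarrow> 9 / 8"
proof -
  note hH = assms(1) and RH = assms(2) and bip = assms(3) and nK = assms(4) and k = assms(5) and cp = assms(6)
  define Sn where "Sn n = {h n G | G :: nat hgraph. verts G = {0..<n} \<and> is_hypergraph G \<and>
                     R G \<subseteq> R H \<and> \<not> subgraph H G}" for n
  have pin: "pi_n H n = Max (Sn n)" for n by (simp add: pi_n_def Sn_def)
  have finS: "finite (Sn n)" for n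
  proof -
    have "Sn n \<subseteq> (\<lambda>G. h n G) ` ({{0..<n}} \<times> Pow (Pow {0..<n}))"
    proof
      fix x assume "x \<in> Sn n"
      then obtain G :: "nat hgraph" where G: "x = h n G" "verts G = {0..<n}" "is_hypergraph G" by (auto simp: Sn_def)
      have "G = (verts G, edges G)" by (simp add: verts_def edges_def)
      moreover have "edges G \<subseteq> Pow {0..<n}" using G by (simp add: is_hypergraph_def)
      ultimately have "G \<in> {{0..<n}} \<times> Pow (Pow {0..<n})" using G by (metis PowI SigmaI singletonI)
      then show "x \<in> (\<lambda>G. h n G) ` ({{0..<n}} \<times> Pow (Pow {0..<n}))" using G by blast
    qed
    then show ?thesis by (rule finite_subset) simp
  qed
  have memG: "h n (Gc n) \<in> Sn n" for n
  proof -
    have "\<not> subgraph H (Gc n)"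
    proof
      assume "subgraph H (Gc n)"
      then have "subgraph (closed_path (2*k)) (Gc n)" using cp subgraph_trans by blast
      then show False using Gc_nopath[OF k] by blast
    qed
    moreover have "verts (Gc n) = {0..<n}" by (simp add: Gc_def verts_def)
    moreover have "R (Gc n) \<subseteq> R H" using Gc_R RH by simp
    ultimately have P: "verts (Gc n) = {0..<n} \<and> is_hypergraph (Gc n) \<and> R (Gc n) \<subseteq> R H \<and> \<not> subgraph H (Gc n)"
      using Gc_hyp by blast
    show ?thesis unfolding Sn_def mem_Collect_eq by (rule exI[of _ "Gc n"]) (use P in simp)
  qed
  have lower: "pi_n H n \<ge> 9/8 - 2 / real n ^ 2" if n: "n \<ge> 2" for n
  proof -
    have "h n (Gc n) \<le> Max (Sn n)" using finS memG by simp
    then show ?thesis using Gc_h[OF n] pin by simp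
  qed
  show ?thesis unfolding LIMSEQ_iff
  proof (intro allI impI)
    fix r :: real assume r: "r > 0"
    then have r2: "r/2 > 0" by simp
    from upper[OF hH RH bip nK r2] obtain N where N: "\<forall>n\<ge>N. \<forall>G :: nat hgraph. verts G = {0..<n} \<and> is_hypergraph G \<and> R G \<subseteq> R H \<and> \<not> subgraph H G
           \<longrightarrow> h n G \<le> 9/8 + r/2" by blast
    define N' where "N' = N + nat \<lceil>2 / r\<rceil> + 2"
    show "\<exists>no. \<forall>n\<ge>no. norm (pi_n H n - 9/8) < r"
    proof (intro exI[of _ N'] allI impI)
      fix n assume n: "N' \<le> n"
      have n2: "n \<ge> 2" and nN: "n \<ge> N" using n by (auto simp: N'_def)
      have up: "pi_n H n \<le> 9/8 + r/2"
      proof -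
        have ne: "Sn n \<noteq> {}" using memG by blast
        have "\<forall>x\<in>Sn n. x \<le> 9/8 + r/2"
        proof
          fix x assume "x \<in> Sn n"
          then obtain G :: "nat hgraph" where G: "x = h n G" "verts G = {0..<n} \<and> is_hypergraph G \<and> R G \<subseteq> R H \<and> \<not> subgraph H G"
            unfolding Sn_def by blast
          have "h n G \<le> 9/8 + r/2" using N[rule_format, OF nN G(2)] .
          then show "x \<le> 9/8 + r/2" using G(1) by simp
        qed
        then show ?thesis using finS ne pin by simp
      qed
      have "2 / r < real n" using n by (simp add: N'_def) linarith
      then have "2 < r * real n" using r by (simp add: divide_simps mult.commute)
      have np: "real n \<ge> 1" using n2 by simp
      have "2 / real n ^ 2 \<le> 2 / real n"
        using np by (intro divide_left_mono) (auto simp: power2_eq_square)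
      also have "2 / real n < r" using \<open>2 < r * real n\<close> np by (simp add: divide_simps)
      finally have "2 / real n ^ 2 < r" .
      then show "norm (pi_n H n - 9/8) < r" using lower[OF n2] up r by simp
    qed
  qed
qed


end
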